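(* Let ${\cal G}$ be a colored graph and $L$ a line of color $i$ joining vertices $v$ and $w$, such that the bubbles of colors $\widehat i$ containing $v$ and $w$, call them $B_a$ and $B_b$, are distinct. Let ${\cal G}-L$ be the graph obtained by contracting $L$. Then (i) for each color $k\neq i$, the bubble of colors $\widehat k$ of ${\cal G}$ containing $v$ (which also contains $w$) becomes a bubble of ${\cal G}-L$ with two fewer vertices, three fewer lines, one fewer face and the same genus; all other bubbles of colors $\widehat k$, $k\neq i$, are unchanged; (ii) $B_a$ and $B_b$ are replaced by a single bubble of colors $\widehat i$ with $|n_a|+|n_b|-2$ vertices, $|l_a|+|l_b|-3$ lines, $|f_a|+|f_b|-3$ faces, and genus $g_a+g_b$. In particular, if $B_a$ is planar the merged bubble has genus $g_b$.
   Context: Colored graph: a finite connected bipartite multigraph (vertices "black" or "white", no loops) whose edges ("lines") carry a color in $\{0,1,2,3\}$ such that every vertex is incident to exactly one line of each color. For colors $i\neq j$, a face of colors $ij$ is a connected component of the subgraph formed by the lines of colors $i,j$. For a color $i$, $\widehat{i}=\{0,1,2,3\}\setminus\{i\}$; a bubble of colors $\widehat i$ is a connected component of the subgraph formed by all lines of colors in $\widehat i$; for a bubble $b$, $n_b,l_b$ are its vertices and lines, $f_b$ the faces of ${\cal G}$ with both colors in $\widehat i$ contained in $b$, and its genus is defined by $|n_b|-|l_b|+|f_b|=2-2g_b$; planar means $g_b=0$. Contraction of a line $L$ of color $i$ with endpoints $v,w$ (lying in distinct bubbles of colors $\widehat i$): for each color $j\neq i$ let $a_j$ (resp. $b_j$)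 be the other endpoint of the line of color $j$ at $v$ (resp. at $w$). Delete $v$, $w$ and all lines incident to them, and for each $j\neq i$ add a line of color $j$ between $a_j$ and $b_j$. The result ${\cal G}-L$ is again a colored graph. *)

theory Defs
  imports Complex_Main
begin

text \<open>A colored graph (4 colors 0..3) is encoded by its black vertices, its white
vertices, and for each color c a bijection lc c from black to white vertices:
the line of color c at the black vertex x joins x with lc c x.  A line is thus
identified with the pair (black endpoint, color).  This captures exactly the
bipartite multigraphs without loops in which every vertex has exactly one
incident line of each color.\<close>

record 'v cgraph =
  blk :: "'v set"
  wht :: "'v set"
  lc  :: "nat \<Rightarrow> 'v \<Rightarrow> 'v"

definition colors :: "nat set" where
  "colors = {0..3}"

definition verts :: "'v cgraph \<Rightarrow> 'v set" where
  "verts G = blk G \<union> wht G"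

definition adj :: "'v cgraph \<Rightarrow> nat set \<Rightarrow> 'v \<Rightarrow> 'v \<Rightarrow> bool" where
  "adj G C x y \<longleftrightarrow> (\<exists>c\<in>C. (x \<in> blk G \<and> y = lc G c x) \<or> (y \<in> blk G \<and> x = lc G c y))"

definition comp :: "'v cgraph \<Rightarrow> nat set \<Rightarrow> 'v \<Rightarrow> 'v set" where
  "comp G C x = {y. (adj G C)\<^sup>*\<^sup>* x y}"

definition colored_graph :: "'v cgraph \<Rightarrow> bool" where
  "colored_graph G \<longleftrightarrow> finite (blk G) \<and> finite (wht G) \<and> blk G \<inter> wht G = {}
     \<and> (\<forall>c\<in>colors. bij_betw (lc G c) (blk G) (wht G))
     \<and> verts G \<noteq> {} \<and> (\<forall>x\<in>verts G. \<forall>y\<in>verts G. (adj G colors)\<^sup>*\<^sup>* x y)"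

definition bubbles :: "'v cgraph \<Rightarrow> nat \<Rightarrow> 'v set set" where
  "bubbles G i = {comp G (colors - {i}) x | x. x \<in> verts G}"

definition blines :: "'v cgraph \<Rightarrow> nat set \<Rightarrow> 'v set \<Rightarrow> (nat \<times> 'v) set" where
  "blines G C S = {(c, x). x \<in> S \<inter> blk G \<and> c \<in> C}"

text \<open>faces of G with both colors in C contained in S; a face of colors ij is recorded
together with its color pair (i < j), since distinct faces may share a vertex set\<close>
definition bfaces :: "'v cgraph \<Rightarrow> nat set \<Rightarrow> 'v set \<Rightarrow> (nat \<times> nat \<times> 'v set) set" where
  "bfaces G C S = {(i, j, F). i \<in> C \<and> j \<in> C \<and> i < j \<and>
                     (\<exists>x\<in>verts G. F = comp G {i, j} x) \<and> F \<subseteq> S}"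

definition genus :: "'v cgraph \<Rightarrow> nat set \<Rightarrow> 'v set \<Rightarrow> real" where
  "genus G C S = (2 - (real (card S) - real (card (blines G C S)) + real (card (bfaces G C S)))) / 2"

text \<open>contraction of the line of color i at the black vertex b (joining b and w = lc G i b):
delete b and w; for j \<noteq> i the black vertex whose j-line went to w is now joined
by color j to lc G j b, the other endpoint of the j-line at b.\<close>
definition contract :: "'v cgraph \<Rightarrow> 'v \<Rightarrow> nat \<Rightarrow> 'v cgraph" where
  "contract G b i =
     \<lparr> blk = blk G - {b}, wht = wht G - {lc G i b},
       lc = (\<lambda>c x. if c \<noteq> i \<and> lc G c x = lc G i b then lc G c b else lc G c x) \<rparr>"

end

theory Submission
  imports Defs
begin


lemma adj_sym: "adj G C x y \<Longrightarrow> adj G C y x"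
  unfolding adj_def by blast

lemma rtranclp_sym_gen: assumes "\<And>x y. r x y \<Longrightarrow> r y x" "r\<^sup>*\<^sup>* x y" shows "r\<^sup>*\<^sup>* y x"
  using assms(2)
proof induction
  case base thus ?case by simp
next
  case (step y z) thus ?case using assms(1) by (meson converse_rtranclp_into_rtranclp)
qed

lemma adj_rt_sym: "(adj G C)\<^sup>*\<^sup>* x y \<Longrightarrow> (adj G C)\<^sup>*\<^sup>* y x"
  using rtranclp_sym_gen[of "adj G C"] adj_sym by metis

lemma comp_refl: "x \<in> comp G C x" by (simp add: comp_def)

lemma comp_trans: "y \<in> comp G C x \<Longrightarrow> z \<in> comp G C y \<Longrightarrow> z \<in> comp G C x"
  by (auto simp: comp_def)

lemma comp_sym: "y \<in> comp G C x \<Longrightarrow> x \<in> comp G C y"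
  by (auto simp: comp_def intro: adj_rt_sym)

lemma comp_eq: "y \<in> comp G C x \<Longrightarrow> comp G C y = comp G C x"
proof
  assume "y \<in> comp G C x"
  show "comp G C y \<subseteq> comp G C x"
    using comp_trans[OF \<open>y \<in> comp G C x\<close>] by blast
  show "comp G C x \<subseteq> comp G C y"
    using comp_trans[OF comp_sym[OF \<open>y \<in> comp G C x\<close>]] by blast
qed

lemma comp_step: "y \<in> comp G C x \<Longrightarrow> adj G C y z \<Longrightarrow> z \<in> comp G C x"
  by (auto simp: comp_def)

lemma adj_mono: "adj G C x y \<Longrightarrow> C \<subseteq> D \<Longrightarrow> adj G D x y" by (auto simp: adj_def)

lemma rt_adj_mono: "(adj G C)\<^sup>*\<^sup>* x y \<Longrightarrow> C \<subseteq> D \<Longrightarrow> (adj G D)\<^sup>*\<^sup>* x y"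
proof (induction rule: rtranclp_induct)
  case base then show ?case by simp
next
  case (step y z) then show ?case by (meson adj_mono rtranclp.rtrancl_into_rtrancl)
qed

lemma comp_mono: "C \<subseteq> D \<Longrightarrow> comp G C x \<subseteq> comp G D x"
proof
  fix y assume "C \<subseteq> D" "y \<in> comp G C x"
  then show "y \<in> comp G D x" using rt_adj_mono[of G C x y D] by (simp add: comp_def)
qed

lemma cg_bij: "colored_graph G \<Longrightarrow> c \<in> colors \<Longrightarrow> bij_betw (lc G c) (blk G) (wht G)"
  unfolding colored_graph_def by blast

lemma adj_verts: "colored_graph G \<Longrightarrow> C \<subseteq> colors \<Longrightarrow> adj G C x y \<Longrightarrow> y \<in> verts G"
proof -
  assume a: "colored_graph G" "C \<subseteq> colors" "adj G C x y"
  then obtain c where c: "c \<in> C" "(x \<in> blk G \<and> y = lc G c x) \<or> (y \<in> blk G \<and> x = lc G c y)"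
    unfolding adj_def by blast
  show ?thesis
  proof (cases "y \<in> blk G")
    case True then show ?thesis by (simp add: verts_def)
  next
    case False
    then have "x \<in> blk G" "y = lc G c x" using c by auto
    moreover have "bij_betw (lc G c) (blk G) (wht G)" using cg_bij a c by blast
    ultimately have "y \<in> wht G" using bij_betwE by blast
    then show ?thesis by (simp add: verts_def)
  qed
qed

lemma comp_verts: assumes "colored_graph G" "C \<subseteq> colors" "x \<in> verts G" shows "comp G C x \<subseteq> verts G"
proof
  fix y assume "y \<in> comp G C x"
  then have "(adj G C)\<^sup>*\<^sup>* x y" by (simp add: comp_def)
  then show "y \<in> verts G"
  proof induction
    case base then show ?case using assms(3) .
  next
    case (step y z) show ?case by (rule adj_verts[OF assms(1,2) step(2)])
  qed
qed

definition Pairs :: "nat set \<Rightarrow> (nat \<times> nat) set" where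
  "Pairs C = {(p,q). p \<in> C \<and> q \<in> C \<and> p < q}"

lemma card_Pairs: assumes "finite D" shows "card (Pairs D) = card D choose 2"
proof -
  have "bij_betw (\<lambda>(p,q). {p,q}) (Pairs D) {B. B \<subseteq> D \<and> card B = 2}"
    unfolding bij_betw_def
  proof
    show "inj_on (\<lambda>(p,q). {p,q}) (Pairs D)"
      by (auto simp: inj_on_def Pairs_def doubleton_eq_iff)
    show "(\<lambda>(p,q). {p,q}) ` Pairs D = {B. B \<subseteq> D \<and> card B = 2}"
    proof
      show "(\<lambda>(p,q). {p,q}) ` Pairs D \<subseteq> {B. B \<subseteq> D \<and> card B = 2}"
        by (auto simp: Pairs_def)
      show "{B. B \<subseteq> D \<and> card B = 2} \<subseteq> (\<lambda>(p,q). {p,q}) ` Pairs D"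
      proof
        fix B assume "B \<in> {B. B \<subseteq> D \<and> card B = 2}"
        then obtain x y where B: "B = {x,y}" "x \<noteq> y" "B \<subseteq> D" by (auto simp: card_2_iff)
        then have "(min x y, max x y) \<in> Pairs D" by (auto simp: Pairs_def min_def max_def)
        moreover have "B = (\<lambda>(p,q). {p,q}) (min x y, max x y)" using B by (auto simp: min_def max_def)
        ultimately show "B \<in> (\<lambda>(p,q). {p,q}) ` Pairs D" by blast
      qed
    qed
  qed
  then have "card (Pairs D) = card {B. B \<subseteq> D \<and> card B = 2}" by (rule bij_betw_same_card)
  also have "\<dots> = card D choose 2" using n_subsets[OF assms] .
  finally show ?thesis .
qed

lemma blines_eq: "blines K C S = C \<times> (S \<inter> blk K)"
  by (auto simp: blines_def)

lemma card_colors: "card colors = 4" by (simp add: colors_def)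



locale ctr =
  fixes G :: "'v cgraph" and b :: 'v and i :: nat and wt :: 'v and H :: "'v cgraph" and E :: "'v set"
  assumes wt_def: "wt = lc G i b" and H_def: "H = contract G b i" and E_def: "E = {b, wt}"
    and cg: "colored_graph G" and bB: "b \<in> blk G" and iC: "i \<in> colors"
    and sep: "wt \<notin> comp G (colors - {i}) b"
begin


lemma fin: "finite (blk G)" "finite (wht G)" using cg by (simp_all add: colored_graph_def)
lemma disj: "blk G \<inter> wht G = {}" using cg by (simp add: colored_graph_def)
lemma bij: "c \<in> colors \<Longrightarrow> bij_betw (lc G c) (blk G) (wht G)" using cg by (rule cg_bij)
lemma lcW: "c \<in> colors \<Longrightarrow> x \<in> blk G \<Longrightarrow> lc G c x \<in> wht G"
  using bij bij_betwE by metis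
lemma lc_inj: "c \<in> colors \<Longrightarrow> x \<in> blk G \<Longrightarrow> y \<in> blk G \<Longrightarrow> lc G c x = lc G c y \<Longrightarrow> x = y"
  using bij bij_betw_imp_inj_on inj_onD by metis
lemma wtW: "wt \<in> wht G" using lcW[OF iC bB] wt_def by simp
lemma wt_nb: "wt \<notin> blk G" using wtW disj by blast
lemma bnW: "b \<notin> wht G" using bB disj by blast
lemma b_ne_wt: "b \<noteq> wt" using bB wt_nb by blast
lemma W_nb: "x \<in> wht G \<Longrightarrow> x \<noteq> b" using bnW by blast
lemma B_nwt: "x \<in> blk G \<Longrightarrow> x \<noteq> wt" using wt_nb by blast

lemma lcb_ne: assumes "c \<in> colors" "c \<noteq> i" shows "lc G c b \<noteq> wt"
proof
  assume eq: "lc G c b = wt"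
  have "adj G (colors - {i}) b wt" unfolding adj_def using assms bB eq by force
  then have "wt \<in> comp G (colors - {i}) b" by (simp add: comp_def)
  then show False using sep by blast
qed

lemma H_blk: "blk H = blk G - {b}" by (simp add: contract_def H_def wt_def)
lemma H_wht: "wht H = wht G - {wt}" by (simp add: contract_def H_def wt_def)
lemma H_lc: "lc H c x = (if c \<noteq> i \<and> lc G c x = wt then lc G c b else lc G c x)"
  by (simp add: contract_def H_def wt_def)

lemma vertsH: "verts H = verts G - E"
  using H_blk H_wht bB wtW wt_nb bnW unfolding verts_def E_def by blast

lemma lcH_W: assumes "c \<in> colors" "x \<in> blk G" "x \<noteq> b"
  shows "lc H c x \<in> wht G \<and> lc H c x \<noteq> wt"
proof (cases "c \<noteq> i \<and> lc G c x = wt")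
  case True
  then show ?thesis using H_lc lcW[OF assms(1) bB] lcb_ne[OF assms(1)] by simp
next
  case False
  have "lc G c x \<noteq> wt"
  proof (cases "c = i")
    case True
    then show ?thesis using lc_inj[OF iC assms(2) bB] assms(3) wt_def by blast
  next
    case False2: False
    then show ?thesis using False by blast
  qed
  then show ?thesis using H_lc False lcW[OF assms(1,2)] by simp
qed

lemma F1: assumes "P \<subseteq> colors" "adj G P x y" "x \<notin> E" "y \<notin> E" shows "adj H P x y"
proof -
  obtain c where c: "c \<in> P" "(x \<in> blk G \<and> y = lc G c x) \<or> (y \<in> blk G \<and> x = lc G c y)"
    using assms(2) unfolding adj_def by blast
  show ?thesis
  proof (cases "x \<in> blk G \<and> y = lc G c x")
    case True
    then have "x \<in> blk H" "lc H c x = y" using assms(3,4) H_blk H_lc E_def by auto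
    then show ?thesis unfolding adj_def using c(1) by blast
  next
    case False
    then have "y \<in> blk G" "x = lc G c y" using c by auto
    then have "y \<in> blk H" "lc H c y = x" using assms(3,4) H_blk H_lc E_def by auto
    then show ?thesis unfolding adj_def using c(1) by blast
  qed
qed

lemma F2: assumes "P \<subseteq> colors" "adj H P x y"
  shows "adj G P x y \<or> (\<exists>c\<in>P-{i}. x \<in> blk G \<and> lc G c x = wt \<and> y = lc G c b)
                      \<or> (\<exists>c\<in>P-{i}. y \<in> blk G \<and> lc G c y = wt \<and> x = lc G c b)"
proof -
  obtain c where c: "c \<in> P" "(x \<in> blk H \<and> y = lc H c x) \<or> (y \<in> blk H \<and> x = lc H c y)"
    using assms(2) unfolding adj_def by blast
  show ?thesis
  proof (cases "x \<in> blk H \<and> y = lc H c x")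
    case True
    show ?thesis
    proof (cases "c \<noteq> i \<and> lc G c x = wt")
      case True2: True
      then show ?thesis using True c(1) H_blk H_lc by auto
    next
      case False
      then have "y = lc G c x" "x \<in> blk G" using True H_lc H_blk by auto
      then have "adj G P x y" unfolding adj_def using c(1) by blast
      then show ?thesis by blast
    qed
  next
    case False
    then have yx: "y \<in> blk H" "x = lc H c y" using c by auto
    show ?thesis
    proof (cases "c \<noteq> i \<and> lc G c y = wt")
      case True2: True
      then show ?thesis using yx c(1) H_blk H_lc by auto
    next
      case False
      then have "x = lc G c y" "y \<in> blk G" using yx H_lc H_blk by auto
      then have "adj G P x y" unfolding adj_def using c(1) by blast
      then show ?thesis by blast
    qed
  qed
qed

lemma F2E1: assumes "P \<subseteq> colors" "adj H P x y" shows "y \<notin> E"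
proof -
  obtain c where c: "c \<in> P" "(x \<in> blk H \<and> y = lc H c x) \<or> (y \<in> blk H \<and> x = lc H c y)"
    using assms(2) unfolding adj_def by blast
  have cC: "c \<in> colors" using c(1) assms(1) by blast
  show ?thesis
  proof (cases "x \<in> blk H \<and> y = lc H c x")
    case True
    then have "y \<in> wht G" "y \<noteq> wt" using lcH_W[OF cC] H_blk by auto
    then show ?thesis using W_nb E_def by blast
  next
    case False
    then have "y \<in> blk G - {b}" using c H_blk by auto
    then show ?thesis using B_nwt E_def by blast
  qed
qed

lemma F2E: assumes "P \<subseteq> colors" "adj H P x y" shows "x \<notin> E" "y \<notin> E"
  using F2E1[OF assms(1) adj_sym[OF assms(2)]] F2E1[OF assms] by auto

definition U :: "nat set \<Rightarrow> 'v set" where "U P = comp G P b \<union> comp G P wt"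

lemma E_U: "b \<in> U P" "wt \<in> U P" by (auto simp: U_def comp_refl)

lemma U_mono: "P \<subseteq> C \<Longrightarrow> U P \<subseteq> U C"
  unfolding U_def by (intro Un_mono comp_mono)

lemma U_closed: "z \<in> U P \<Longrightarrow> adj G P z z' \<Longrightarrow> z' \<in> U P"
  unfolding U_def using comp_step[of z G P b z'] comp_step[of z G P wt z'] by blast

lemma notU: assumes "y \<notin> U P" "z \<in> comp G P y" shows "z \<notin> U P"
proof
  assume "z \<in> U P"
  then have "z \<in> comp G P b \<or> z \<in> comp G P wt" by (simp add: U_def)
  moreover have "comp G P z = comp G P y" using comp_eq[OF assms(2)] .
  ultimately have "y \<in> comp G P b \<or> y \<in> comp G P wt"
    using comp_eq[of z G P b] comp_eq[of z G P wt] comp_refl[of y G P] by auto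
  then show False using assms(1) by (simp add: U_def)
qed

lemma new1U: "c \<in> P \<Longrightarrow> x \<in> blk G \<Longrightarrow> lc G c x = wt \<Longrightarrow> x \<in> U P"
proof -
  assume a: "c \<in> P" "x \<in> blk G" "lc G c x = wt"
  then have "adj G P wt x" unfolding adj_def by auto
  then have "x \<in> comp G P wt" by (simp add: comp_def)
  then show ?thesis by (simp add: U_def)
qed

lemma new2U: "c \<in> P \<Longrightarrow> lc G c b \<in> U P"
proof -
  assume a: "c \<in> P"
  then have "adj G P b (lc G c b)" unfolding adj_def using bB by auto
  then have "lc G c b \<in> comp G P b" by (simp add: comp_def)
  then show ?thesis by (simp add: U_def)
qed

lemma U_verts: "P \<subseteq> colors \<Longrightarrow> U P \<subseteq> verts G"
proof -
  assume P: "P \<subseteq> colors"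
  have "b \<in> verts G" "wt \<in> verts G" using bB wtW by (auto simp: verts_def)
  then show ?thesis unfolding U_def using comp_verts[OF cg P] by (intro Un_least)
qed

end


context ctr begin

lemma GC_a: assumes P: "P \<subseteq> colors" and y: "y \<in> U P - E" shows "comp H P y \<subseteq> U P - E"
proof
  fix z assume "z \<in> comp H P y"
  then have "(adj H P)\<^sup>*\<^sup>* y z" by (simp add: comp_def)
  then show "z \<in> U P - E"
  proof induction
    case base then show ?case using y .
  next
    case (step z z')
    have nE: "z' \<notin> E" using F2E(2)[OF P step(2)] .
    have "z' \<in> U P"
      using F2[OF P step(2)]
    proof (elim disjE)
      assume "adj G P z z'" then show ?thesis using U_closed step(3) by blast
    next
      assume "\<exists>c\<in>P-{i}. z \<in> blk G \<and> lc G c z = wt \<and> z' = lc G c b"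
      then show ?thesis using new2U by blast
    next
      assume "\<exists>c\<in>P-{i}. z' \<in> blk G \<and> lc G c z' = wt \<and> z = lc G c b"
      then show ?thesis using new1U by blast
    qed
    then show ?case using nE by blast
  qed
qed

lemma GC_b: assumes P: "P \<subseteq> colors" and y: "y \<notin> U P" shows "comp H P y \<subseteq> comp G P y"
proof
  fix z assume "z \<in> comp H P y"
  then have "(adj H P)\<^sup>*\<^sup>* y z" by (simp add: comp_def)
  then show "z \<in> comp G P y"
  proof induction
    case base then show ?case by (rule comp_refl)
  next
    case (step z z')
    have zU: "z \<notin> U P" using notU[OF y step(3)] .
    have "adj G P z z'"
      using F2[OF P step(2)]
    proof (elim disjE)
      assume "adj G P z z'" then show ?thesis .
    next
      assume "\<exists>c\<in>P-{i}. z \<in> blk G \<and> lc G c z = wt \<and> z' = lc G c b"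
      then have "z \<in> U P" using new1U by blast
      then show ?thesis using zU by blast
    next
      assume "\<exists>c\<in>P-{i}. z' \<in> blk G \<and> lc G c z' = wt \<and> z = lc G c b"
      then have "z \<in> U P" using new2U by blast
      then show ?thesis using zU by blast
    qed
    then show ?case using comp_step step(3) by metis
  qed
qed

lemma EsubU: "E \<subseteq> U P" using E_U E_def by blast

lemma GC_c: assumes P: "P \<subseteq> colors" and y: "y \<notin> U P" shows "comp G P y \<subseteq> comp H P y"
proof
  fix z assume "z \<in> comp G P y"
  then have "(adj G P)\<^sup>*\<^sup>* y z" by (simp add: comp_def)
  then show "z \<in> comp H P y"
  proof induction
    case base then show ?case by (rule comp_refl)
  next
    case (step z z')
    have "z \<in> comp G P y" using step(1) by (simp add: comp_def)
    then have zU: "z \<notin> U P" using notU[OF y] by blast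
    have "z' \<in> comp G P y" using step(1,2) by (simp add: comp_def)
    then have zU': "z' \<notin> U P" using notU[OF y] by blast
    have "adj H P z z'" using F1[OF P step(2)] zU zU' EsubU by blast
    then show ?case using comp_step step(3) by metis
  qed
qed

lemma GC_out: "P \<subseteq> colors \<Longrightarrow> y \<notin> U P \<Longrightarrow> comp H P y = comp G P y"
  using GC_b GC_c by (intro equalityI)

end


context ctr begin

lemma not_inj_nat: fixes f :: "nat \<Rightarrow> 'b" assumes "finite A" "\<And>n. f n \<in> A" shows "\<exists>p q. p < q \<and> f p = f q"
proof -
  have "\<not> inj f"
  proof
    assume inj: "inj f"
    have "range f \<subseteq> A" using assms(2) by blast
    then have "finite (range f)" by (rule finite_subset) (rule assms(1))
    then have "finite (UNIV :: nat set)" using finite_imageD[OF _ inj] by blast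
    then show False by simp
  qed
  then obtain p q where "f p = f q" "p \<noteq> q" unfolding inj_def by blast
  show ?thesis
  proof (cases "p < q")
    case True then show ?thesis using \<open>f p = f q\<close> by blast
  next
    case False then have "q < p" using \<open>p \<noteq> q\<close> by simp
    then show ?thesis using \<open>f p = f q\<close> by (intro exI[of _ q] exI[of _ p]) simp
  qed
qed

lemma FL: assumes c: "c \<in> colors" "c \<noteq> i" and c': "c' \<in> colors" "c' \<noteq> i"
  shows "(adj H {c,c'})\<^sup>*\<^sup>* (lc G c b) (lc G c' b)"
proof -
  define \<sigma> where "\<sigma> = (\<lambda>x. the_inv_into (blk G) (lc G c') (lc G c x))"
  have ic': "inj_on (lc G c') (blk G)" using bij[OF c'(1)] bij_betw_imp_inj_on by blast
  have im: "x \<in> blk G \<Longrightarrow> lc G c x \<in> lc G c' ` blk G" for x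
  proof -
    assume "x \<in> blk G"
    then have "lc G c x \<in> wht G" by (rule lcW[OF c(1)])
    moreover have "lc G c' ` blk G = wht G" using bij_betw_imp_surj_on[OF bij[OF c'(1)]] .
    ultimately show ?thesis by simp
  qed
  have sB: "x \<in> blk G \<Longrightarrow> \<sigma> x \<in> blk G" for x
    unfolding \<sigma>_def using the_inv_into_into[OF ic' im] by blast
  have g\<sigma>: "x \<in> blk G \<Longrightarrow> lc G c' (\<sigma> x) = lc G c x" for x
    unfolding \<sigma>_def using f_the_inv_into_f[OF ic' im] by blast
  have \<sigma>inj: "x \<in> blk G \<Longrightarrow> y \<in> blk G \<Longrightarrow> \<sigma> x = \<sigma> y \<Longrightarrow> x = y" for x y
  proof -
    assume a: "x \<in> blk G" "y \<in> blk G" "\<sigma> x = \<sigma> y"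
    then have "lc G c' (\<sigma> x) = lc G c' (\<sigma> y)" by simp
    then have "lc G c x = lc G c y" using g\<sigma>[OF a(1)] g\<sigma>[OF a(2)] by simp
    then show "x = y" by (rule lc_inj[OF c(1) a(1,2)])
  qed
  have pw: "(\<sigma>^^n) b \<in> blk G" for n
    by (induction n) (auto simp: bB sB)
  have cancel: "x \<in> blk G \<Longrightarrow> y \<in> blk G \<Longrightarrow> (\<sigma>^^n) x = (\<sigma>^^n) y \<Longrightarrow> x = y" for n x y
  proof (induction n)
    case 0 then show ?case by simp
  next
    case (Suc n)
    have "(\<sigma>^^n) x \<in> blk G" "(\<sigma>^^n) y \<in> blk G"
      using Suc.prems(1,2) by (induction n) (auto simp: sB)
    then have "(\<sigma>^^n) x = (\<sigma>^^n) y" using \<sigma>inj Suc.prems(3) by simp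
    then show ?case using Suc by blast
  qed
  have per: "\<exists>n. 0 < n \<and> (\<sigma>^^n) b = b"
  proof -
    obtain p q where pq: "p < q" "(\<sigma>^^p) b = (\<sigma>^^q) b"
      using not_inj_nat[OF fin(1), of "\<lambda>n. (\<sigma>^^n) b"] pw by blast
    have e: "(\<sigma>^^(p + (q-p))) b = (\<sigma>^^p) ((\<sigma>^^(q-p)) b)" by (simp only: funpow_add comp_apply)
    have "p + (q-p) = q" using pq(1) by simp
    then have "(\<sigma>^^q) b = (\<sigma>^^p) ((\<sigma>^^(q-p)) b)" using e by simp
    then have "(\<sigma>^^(q-p)) b = b" using cancel[OF pw bB] pq(2) by metis
    then show ?thesis using pq(1) by (intro exI[of _ "q-p"]) simp
  qed
  define n0 where "n0 = (LEAST n. 0 < n \<and> (\<sigma>^^n) b = b)"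
  have n0: "0 < n0" "(\<sigma>^^n0) b = b" using LeastI_ex[OF per] unfolding n0_def by auto
  have nmin: "0 < k \<Longrightarrow> k < n0 \<Longrightarrow> (\<sigma>^^k) b \<noteq> b" for k
    using not_less_Least[of k "\<lambda>n. 0 < n \<and> (\<sigma>^^n) b = b"] unfolding n0_def by blast
  have cc: "{c,c'} \<subseteq> colors" using c c' by blast
  have sub: "comp G {c,c'} b \<subseteq> comp G (colors - {i}) b" using c c' by (intro comp_mono) blast
  have nwt: "x \<in> comp G {c,c'} b \<Longrightarrow> x \<noteq> wt" for x using sub sep by blast
  have path: "k < n0 \<Longrightarrow> (adj H {c,c'})\<^sup>*\<^sup>* (lc G c b) (lc G c ((\<sigma>^^k) b)) \<and> (\<sigma>^^k) b \<in> comp G {c,c'} b" for k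
  proof (induction k)
    case 0 then show ?case by (simp add: comp_refl)
  next
    case (Suc k)
    define x where "x = (\<sigma>^^k) b"
    define x' where "x' = (\<sigma>^^(Suc k)) b"
    have x'x: "x' = \<sigma> x" unfolding x_def x'_def by simp
    have xB: "x \<in> blk G" using pw[of k] x_def by simp
    have x'B: "x' \<in> blk G" using pw[of "Suc k"] x'_def by simp
    have IH: "(adj H {c,c'})\<^sup>*\<^sup>* (lc G c b) (lc G c x)" "x \<in> comp G {c,c'} b"
      using Suc x_def by auto
    have a1: "adj G {c,c'} x (lc G c x)" unfolding adj_def using xB by blast
    have a2: "adj G {c,c'} (lc G c x) x'" unfolding adj_def using x'B g\<sigma>[OF xB] x'x by auto
    have a3: "adj G {c,c'} x' (lc G c x')" unfolding adj_def using x'B by blast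
    have fx: "lc G c x \<in> comp G {c,c'} b" using comp_step[OF IH(2) a1] .
    have x'c: "x' \<in> comp G {c,c'} b" using comp_step[OF fx a2] .
    have fx': "lc G c x' \<in> comp G {c,c'} b" using comp_step[OF x'c a3] .
    have W1: "lc G c x \<in> wht G" "lc G c x' \<in> wht G" using lcW[OF c(1)] xB x'B by auto
    have ne1: "lc G c x \<notin> E" using W1(1) W_nb nwt[OF fx] E_def by blast
    have ne2: "lc G c x' \<notin> E" using W1(2) W_nb nwt[OF fx'] E_def by blast
    have ne3: "x' \<notin> E" using nmin[of "Suc k"] Suc.prems x'_def B_nwt[OF x'B] E_def by auto
    have "adj H {c,c'} (lc G c x) x'" using F1[OF cc a2 ne1 ne3] .
    moreover have "adj H {c,c'} x' (lc G c x')" using F1[OF cc a3 ne3 ne2] .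
    ultimately have "(adj H {c,c'})\<^sup>*\<^sup>* (lc G c b) (lc G c x')"
      using IH(1) by (meson rtranclp.rtrancl_into_rtrancl)
    then show ?case using x'c x'_def by simp
  qed
  have last: "(adj H {c,c'})\<^sup>*\<^sup>* (lc G c b) (lc G c ((\<sigma>^^(n0-1)) b))"
    using path[of "n0-1"] n0(1) by simp
  have "\<sigma> ((\<sigma>^^(n0-1)) b) = b" using n0 by (metis Suc_pred' funpow.simps(2) o_apply)
  then have "lc G c ((\<sigma>^^(n0-1)) b) = lc G c' b" using g\<sigma>[OF pw[of "n0-1"]] by simp
  then show ?thesis using last by simp
qed

end


context ctr begin

lemma GC_d: assumes P: "P \<subseteq> colors" "c0 \<in> P" "c0 \<noteq> i" and y: "y \<in> U P - E"
  shows "U P - E \<subseteq> comp H P y"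
proof -
  define a where "a = lc G c0 b"
  have c0C: "c0 \<in> colors" using P by blast
  have FLP: "(adj H P)\<^sup>*\<^sup>* (lc G c b) a" if "c \<in> P" "c \<noteq> i" for c
  proof -
    have cC: "c \<in> colors" using that P by blast
    have "(adj H {c,c0})\<^sup>*\<^sup>* (lc G c b) a" unfolding a_def using FL[OF cC that(2) c0C P(3)] .
    moreover have "{c,c0} \<subseteq> P" using that P by blast
    ultimately show ?thesis by (rule rt_adj_mono)
  qed
  have R1: "(adj G P)\<^sup>*\<^sup>* z t \<Longrightarrow> t \<in> E \<Longrightarrow> z \<notin> E \<Longrightarrow> (adj H P)\<^sup>*\<^sup>* z a" for z t
  proof (induction rule: converse_rtranclp_induct)
    case base then show ?case by simp
  next
    case (step z z1)
    show ?case
    proof (cases "z1 \<in> E")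
      case True
      obtain c where c: "c \<in> P" "(z \<in> blk G \<and> z1 = lc G c z) \<or> (z1 \<in> blk G \<and> z = lc G c z1)"
        using step(1) unfolding adj_def by blast
      have cC: "c \<in> colors" using c(1) P by blast
      show ?thesis
      proof (cases "z \<in> blk G \<and> z1 = lc G c z")
        case True2: True
        then have "z1 \<in> wht G" using lcW[OF cC] by blast
        then have z1w: "z1 = wt" using True W_nb E_def by blast
        have zb: "z \<noteq> b" using step(5) E_def by blast
        have ci: "c \<noteq> i"
        proof
          assume "c = i"
          then have "lc G i z = lc G i b" using True2 z1w wt_def by simp
          then show False using lc_inj[OF iC _ bB] True2 zb by blast
        qed
        have "z \<in> blk H" "lc H c z = lc G c b" using True2 z1w zb H_blk H_lc ci by auto
        then have "adj H P z (lc G c b)" unfolding adj_def using c(1) by (intro bexI[of _ c]) auto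
        then show ?thesis using FLP[OF c(1) ci] by (meson converse_rtranclp_into_rtranclp)
      next
        case False
        then have F: "z1 \<in> blk G" "z = lc G c z1" using c(2) by auto
        then have "z1 = b" using True B_nwt E_def by blast
        then have zc: "z = lc G c b" using F by simp
        have ci: "c \<noteq> i" using zc step(5) wt_def E_def by blast
        show ?thesis using FLP[OF c(1) ci] zc by simp
      qed
    next
      case False
      have "(adj H P)\<^sup>*\<^sup>* z1 a" using step(3)[OF step(4) False] .
      moreover have "adj H P z z1" using F1[OF P(1) step(1) step(5) False] .
      ultimately show ?thesis by (meson converse_rtranclp_into_rtranclp)
    qed
  qed
  have toa: "(adj H P)\<^sup>*\<^sup>* z a" if "z \<in> U P - E" for z
  proof -
    have zE: "z \<notin> E" using that by blast
    have "z \<in> comp G P b \<or> z \<in> comp G P wt" using that by (simp add: U_def)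
    then show ?thesis
    proof
      assume "z \<in> comp G P b"
      then have "(adj G P)\<^sup>*\<^sup>* z b" by (simp add: comp_def adj_rt_sym)
      then show ?thesis using R1 zE E_def by blast
    next
      assume "z \<in> comp G P wt"
      then have "(adj G P)\<^sup>*\<^sup>* z wt" by (simp add: comp_def adj_rt_sym)
      then show ?thesis using R1 zE E_def by blast
    qed
  qed
  show ?thesis
  proof
    fix z assume z: "z \<in> U P - E"
    have "(adj H P)\<^sup>*\<^sup>* y a" using toa[OF y] .
    moreover have "(adj H P)\<^sup>*\<^sup>* a z" using adj_rt_sym[OF toa[OF z]] .
    ultimately show "z \<in> comp H P y" by (simp add: comp_def)
  qed
qed

lemma GC_in: assumes "P \<subseteq> colors" "c0 \<in> P" "c0 \<noteq> i" "y \<in> U P - E"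
  shows "comp H P y = U P - E"
  using GC_a[OF assms(1,4)] GC_d[OF assms] by (rule equalityI)

lemma Uwit: assumes "P \<subseteq> colors" "c \<in> P" "c \<noteq> i"
  shows "lc G c b \<in> U P - E" "lc G c b \<in> verts H"
proof -
  have cC: "c \<in> colors" using assms by blast
  have W: "lc G c b \<in> wht G" using lcW[OF cC bB] .
  have n: "lc G c b \<noteq> wt" using lcb_ne[OF cC assms(3)] .
  show "lc G c b \<in> U P - E" using new2U[OF assms(2)] W n W_nb E_def by blast
  show "lc G c b \<in> verts H" using vertsH W n W_nb E_def unfolding verts_def by blast
qed

end


lemma mem_bfaces: "(p,q,F) \<in> bfaces K C S \<longleftrightarrow> p \<in> C \<and> q \<in> C \<and> p < q \<and> (\<exists>x\<in>verts K. F = comp K {p,q} x) \<and> F \<subseteq> S"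
  by (simp add: bfaces_def)

lemma finite_bfaces: assumes "finite C" "finite S" shows "finite (bfaces K C S)"
proof -
  have "bfaces K C S \<subseteq> C \<times> C \<times> Pow S" unfolding bfaces_def by auto
  moreover have "finite (C \<times> C \<times> Pow S)" using assms by simp
  ultimately show ?thesis by (rule finite_subset)
qed

lemma finite_colors: "finite colors" by (simp add: colors_def)

lemma finite_Pairs: "finite C \<Longrightarrow> finite (Pairs C)"
proof -
  assume "finite C"
  moreover have "Pairs C \<subseteq> C \<times> C" unfolding Pairs_def by auto
  ultimately show ?thesis using finite_subset by blast
qed

lemma img_pair: "t \<in> (\<lambda>(p,q). f p q) ` X \<Longrightarrow> (\<And>p q. (p,q) \<in> X \<Longrightarrow> t = f p q \<Longrightarrow> P) \<Longrightarrow> P"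
  by auto

lemma mem_Pairs: "(p,q) \<in> Pairs C \<longleftrightarrow> p \<in> C \<and> q \<in> C \<and> p < q" by (simp add: Pairs_def)

context ctr begin

lemma finite_verts: "finite (verts G)" using fin by (simp add: verts_def)

lemma pair_c0: assumes "p < q" obtains c0 where "c0 \<in> {p,q}" "c0 \<noteq> i"
proof (cases "p = i")
  case True then have "q \<noteq> i" using assms by simp
  then show ?thesis using that by blast
next
  case False then show ?thesis using that by blast
qed

lemma GCp_in: assumes "p < q" "{p,q} \<subseteq> colors" "y \<in> U {p,q} - E" shows "comp H {p,q} y = U {p,q} - E"
proof -
  obtain c0 where "c0 \<in> {p,q}" "c0 \<noteq> i" using pair_c0[OF assms(1)] by blast
  then show ?thesis using GC_in[OF assms(2) _ _ assms(3)] by blast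
qed

lemma Upwit: assumes "p < q" "{p,q} \<subseteq> colors" obtains w where "w \<in> U {p,q} - E" "w \<in> verts H" "comp H {p,q} w = U {p,q} - E"
proof -
  obtain c0 where c0: "c0 \<in> {p,q}" "c0 \<noteq> i" using pair_c0[OF assms(1)] by blast
  have "lc G c0 b \<in> U {p,q} - E" "lc G c0 b \<in> verts H" using Uwit[OF assms(2) c0] by auto
  then show ?thesis using that GCp_in[OF assms] by blast
qed

lemma comp_b_in: "x \<in> comp G P b \<Longrightarrow> comp G P x = comp G P b" by (rule comp_eq)

lemma faces_count: assumes C: "C \<subseteq> colors"
  shows "card (bfaces G C (U C)) = card (bfaces H C (U C - E)) + card (Pairs (C - {i}))"
proof -
  define S where "S = U C"
  have finS: "finite S" unfolding S_def using U_verts[OF C] finite_verts finite_subset by blast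
  have finC: "finite C" using C finite_colors finite_subset by blast
  define A where "A = {t \<in> bfaces G C S. snd (snd t) \<inter> E = {}}"
  define T where "T = (\<lambda>(p,q). (p,q,comp G {p,q} b)) ` Pairs C"
  define Tn where "Tn = (\<lambda>(p,q). (p,q,comp G {p,q} wt)) ` Pairs (C - {i})"
  define TH where "TH = (\<lambda>(p,q). (p,q,U {p,q} - E)) ` Pairs C"
  have pairC: "{p,q} \<subseteq> colors" if "p \<in> C" "q \<in> C" for p q using that C by blast
  have US: "U {p,q} \<subseteq> S" if "p \<in> C" "q \<in> C" for p q
    unfolding S_def using that by (intro U_mono) blast
  have bV: "b \<in> verts G" "wt \<in> verts G" using bB wtW by (auto simp: verts_def)
  have eqG: "bfaces G C S = A \<union> T \<union> Tn"
  proof (intro equalityI subsetI)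
    fix t assume t: "t \<in> bfaces G C S"
    obtain p q F where tpq: "t = (p,q,F)" by (cases t) auto
    have m: "p \<in> C" "q \<in> C" "p < q" "\<exists>x\<in>verts G. F = comp G {p,q} x" "F \<subseteq> S"
      using t tpq by (auto simp: mem_bfaces)
    obtain x where x: "x \<in> verts G" "F = comp G {p,q} x" using m(4) by blast
    have pq: "(p,q) \<in> Pairs C" using m by (simp add: Pairs_def)
    show "t \<in> A \<union> T \<union> Tn"
    proof (cases "F \<inter> E = {}")
      case True then show ?thesis using t tpq A_def by auto
    next
      case False
      then have "b \<in> F \<or> wt \<in> F" using E_def by blast
      then show ?thesis
      proof
        assume "b \<in> F"
        then have "F = comp G {p,q} b" using x comp_eq by metis
        then have "t \<in> T" unfolding T_def tpq using pq by force
        then show ?thesis by blast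
      next
        assume "wt \<in> F"
        then have Fw: "F = comp G {p,q} wt" using x comp_eq by metis
        show ?thesis
        proof (cases "i \<in> {p,q}")
          case True
          then have "adj G {p,q} b wt" unfolding adj_def using bB wt_def by blast
          then have "wt \<in> comp G {p,q} b" by (simp add: comp_def)
          then have "F = comp G {p,q} b" using Fw comp_eq by metis
          then have "t \<in> T" unfolding T_def tpq using pq by force
          then show ?thesis by blast
        next
          case False
          then have "(p,q) \<in> Pairs (C - {i})" using m by (simp add: Pairs_def)
          then have "t \<in> Tn" unfolding Tn_def tpq using Fw by force
          then show ?thesis by blast
        qed
      qed
    qed
  next
    fix t assume "t \<in> A \<union> T \<union> Tn"
    then consider "t \<in> A" | "t \<in> T" | "t \<in> Tn" by blast
    then show "t \<in> bfaces G C S"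
    proof cases
      case 1 then show ?thesis by (simp add: A_def)
    next
      case 2
      then obtain p q where pq: "(p,q) \<in> Pairs C" "t = (p,q,comp G {p,q} b)" unfolding T_def by (rule img_pair)
      have "comp G {p,q} b \<subseteq> S" using US pq(1) by (auto simp: Pairs_def U_def)
      then show ?thesis using pq bV by (auto simp: mem_bfaces Pairs_def)
    next
      case 3
      then obtain p q where pq: "(p,q) \<in> Pairs (C - {i})" "t = (p,q,comp G {p,q} wt)" unfolding Tn_def by (rule img_pair)
      have "comp G {p,q} wt \<subseteq> S" using US pq(1) by (auto simp: Pairs_def U_def)
      then show ?thesis using pq bV by (auto simp: mem_bfaces Pairs_def)
    qed
  qed
  have eqH: "bfaces H C (S - E) = A \<union> TH"
  proof (intro equalityI subsetI)
    fix t assume t: "t \<in> bfaces H C (S - E)"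
    obtain p q F where tpq: "t = (p,q,F)" by (cases t) auto
    have m: "p \<in> C" "q \<in> C" "p < q" "\<exists>x\<in>verts H. F = comp H {p,q} x" "F \<subseteq> S - E"
      using t tpq by (auto simp: mem_bfaces)
    obtain x where x: "x \<in> verts H" "F = comp H {p,q} x" using m(4) by blast
    have pq: "(p,q) \<in> Pairs C" using m by (simp add: Pairs_def)
    have xG: "x \<in> verts G" "x \<notin> E" using x(1) vertsH by auto
    show "t \<in> A \<union> TH"
    proof (cases "x \<in> U {p,q}")
      case True
      then have "F = U {p,q} - E" using GCp_in[OF m(3) pairC[OF m(1,2)]] x(2) xG(2) by blast
      then have "t \<in> TH" unfolding TH_def tpq using pq by force
      then show ?thesis by blast
    next
      case False
      then have FG: "F = comp G {p,q} x" using GC_out[OF pairC[OF m(1,2)]] x(2) by blast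
      have "t \<in> bfaces G C S" using tpq m FG xG by (auto simp: mem_bfaces)
      moreover have "F \<inter> E = {}" using m(5) by blast
      ultimately show ?thesis using tpq A_def by auto
    qed
  next
    fix t assume "t \<in> A \<union> TH"
    then consider "t \<in> A" | "t \<in> TH" by blast
    then show "t \<in> bfaces H C (S - E)"
    proof cases
      case 1
      obtain p q F where tpq: "t = (p,q,F)" by (cases t) auto
      have tA: "t \<in> bfaces G C S" "F \<inter> E = {}" using 1 tpq A_def by auto
      have m: "p \<in> C" "q \<in> C" "p < q" "\<exists>x\<in>verts G. F = comp G {p,q} x" "F \<subseteq> S"
        using tA tpq by (auto simp: mem_bfaces)
      obtain x where x: "x \<in> verts G" "F = comp G {p,q} x" using m(4) by blast
      have xF: "x \<in> F" using x(2) comp_refl by metis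
      then have xE: "x \<notin> E" using tA(2) by blast
      have xU: "x \<notin> U {p,q}"
      proof
        assume "x \<in> U {p,q}"
        then have "x \<in> comp G {p,q} b \<or> x \<in> comp G {p,q} wt" by (simp add: U_def)
        then have "b \<in> F \<or> wt \<in> F" using x(2) comp_eq comp_refl by metis
        then show False using tA(2) E_def by blast
      qed
      have "F = comp H {p,q} x" using GC_out[OF pairC[OF m(1,2)] xU] x(2) by simp
      moreover have "x \<in> verts H" using vertsH x(1) xE by blast
      ultimately show ?thesis using tpq m tA(2) by (auto simp: mem_bfaces)
    next
      case 2
      then obtain p q where pq: "(p,q) \<in> Pairs C" "t = (p,q,U {p,q} - E)" unfolding TH_def by (rule img_pair)
      have m: "p \<in> C" "q \<in> C" "p < q" using pq(1) by (auto simp: Pairs_def)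
      obtain w where w: "w \<in> U {p,q} - E" "w \<in> verts H" "comp H {p,q} w = U {p,q} - E"
        using Upwit[OF m(3) pairC[OF m(1,2)]] by blast
      have "U {p,q} - E \<subseteq> S - E" using US[OF m(1,2)] by blast
      then show ?thesis using pq(2) m w by (auto simp: mem_bfaces)
    qed
  qed
  have finP: "finite (Pairs C)" "finite (Pairs (C - {i}))" using finC finite_Pairs by auto
  have finG: "finite (bfaces G C S)" using finite_bfaces[OF finC finS] .
  have finA: "finite A" using finG A_def by simp
  have finT: "finite T" "finite Tn" "finite TH" using finP T_def Tn_def TH_def by auto
  have dAT: "A \<inter> T = {}"
  proof (rule ccontr)
    assume "A \<inter> T \<noteq> {}"
    then obtain t where t: "t \<in> A" "t \<in> T" by blast
    from t(2) obtain p q where "t = (p,q,comp G {p,q} b)" unfolding T_def by (rule img_pair)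
    with t(1) have "(p,q,comp G {p,q} b) \<in> A" by simp
    then have "comp G {p,q} b \<inter> E = {}" using A_def by simp
    moreover have "b \<in> comp G {p,q} b" by (rule comp_refl)
    moreover have "b \<in> E" by (simp add: E_def)
    ultimately show False by blast
  qed
  have dATn: "(A \<union> T) \<inter> Tn = {}"
  proof (rule ccontr)
    assume "(A \<union> T) \<inter> Tn \<noteq> {}"
    then obtain t where t: "t \<in> A \<union> T" "t \<in> Tn" by blast
    from t(2) obtain p q where pq0: "(p,q) \<in> Pairs (C - {i})" "t = (p,q,comp G {p,q} wt)" unfolding Tn_def by (rule img_pair)
    with t(1) have pq: "(p,q) \<in> Pairs (C - {i})" "(p,q,comp G {p,q} wt) \<in> A \<union> T" by simp_all
    show False
    proof (cases "(p,q,comp G {p,q} wt) \<in> A")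
      case True
      then have "comp G {p,q} wt \<inter> E = {}" using A_def by simp
      moreover have "wt \<in> comp G {p,q} wt" by (rule comp_refl)
      moreover have "wt \<in> E" by (simp add: E_def)
      ultimately show False by blast
    next
      case False
      then have "(p,q,comp G {p,q} wt) \<in> T" using pq by blast
      then obtain p' q' where "(p',q') \<in> Pairs C" "(p,q,comp G {p,q} wt) = (p',q',comp G {p',q'} b)" unfolding T_def by (rule img_pair)
      then have "comp G {p,q} wt = comp G {p,q} b" by auto
      then have "wt \<in> comp G {p,q} b" using comp_refl[of wt G "{p,q}"] by simp
      moreover have "comp G {p,q} b \<subseteq> comp G (colors - {i}) b" using pq(1) C by (intro comp_mono) (auto simp: Pairs_def)
      ultimately show False using sep by blast
    qed
  qed
  have dATH: "A \<inter> TH = {}"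
  proof (rule ccontr)
    assume "A \<inter> TH \<noteq> {}"
    then obtain t where t: "t \<in> A" "t \<in> TH" by blast
    from t(2) obtain p q where "(p,q) \<in> Pairs C" "t = (p,q,U {p,q} - E)" unfolding TH_def by (rule img_pair)
    with t(1) have pq: "(p,q) \<in> Pairs C" "(p,q,U {p,q} - E) \<in> A" by simp_all
    then have "(p,q,U {p,q} - E) \<in> bfaces G C S" using A_def by simp
    then obtain x where x: "x \<in> verts G" "U {p,q} - E = comp G {p,q} x" by (auto simp: mem_bfaces)
    have "x \<in> U {p,q} - E" using x(2) comp_refl[of x G "{p,q}"] by simp
    then have "x \<in> comp G {p,q} b \<or> x \<in> comp G {p,q} wt" by (simp add: U_def)
    then have "b \<in> comp G {p,q} x \<or> wt \<in> comp G {p,q} x"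
    proof
      assume "x \<in> comp G {p,q} b"
      then show ?thesis using comp_eq[of x G "{p,q}" b] comp_refl[of b G "{p,q}"] by simp
    next
      assume "x \<in> comp G {p,q} wt"
      then show ?thesis using comp_eq[of x G "{p,q}" wt] comp_refl[of wt G "{p,q}"] by simp
    qed
    then show False using x(2) E_def by blast
  qed
  have injT: "inj_on (\<lambda>(p,q). (p::nat,q::nat,comp G {p,q} b)) X" for X by (auto simp: inj_on_def)
  have injTn: "inj_on (\<lambda>(p,q). (p::nat,q::nat,comp G {p,q} wt)) X" for X by (auto simp: inj_on_def)
  have injTH: "inj_on (\<lambda>(p,q). (p::nat,q::nat,U {p,q} - E)) X" for X by (auto simp: inj_on_def)
  have cT: "card T = card (Pairs C)" unfolding T_def using card_image[OF injT] .
  have cTn: "card Tn = card (Pairs (C - {i}))" unfolding Tn_def using card_image[OF injTn] .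
  have cTH: "card TH = card (Pairs C)" unfolding TH_def using card_image[OF injTH] .
  have "card (bfaces G C S) = card (A \<union> T) + card Tn"
    using eqG card_Un_disjoint[OF _ finT(2) dATn] finA finT(1) by simp
  also have "\<dots> = card A + card T + card Tn" using card_Un_disjoint[OF finA finT(1) dAT] by simp
  finally have cG: "card (bfaces G C S) = card A + card (Pairs C) + card (Pairs (C - {i}))" using cT cTn by simp
  have cH: "card (bfaces H C (S - E)) = card A + card (Pairs C)"
    using eqH card_Un_disjoint[OF finA finT(3) dATH] cTH by simp
  show ?thesis using cG cH S_def by simp
qed

end


context ctr begin

lemma bubbles_H: assumes C: "C \<subseteq> colors" "c0 \<in> C" "c0 \<noteq> i"
  shows "{comp H C x | x. x \<in> verts H} = insert (U C - E) {comp G C x | x. x \<in> verts G \<and> x \<notin> U C}"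
proof (intro equalityI subsetI)
  fix Y assume "Y \<in> {comp H C x | x. x \<in> verts H}"
  then obtain x where x: "x \<in> verts H" "Y = comp H C x" by blast
  have xG: "x \<in> verts G" "x \<notin> E" using x(1) vertsH by auto
  show "Y \<in> insert (U C - E) {comp G C x | x. x \<in> verts G \<and> x \<notin> U C}"
  proof (cases "x \<in> U C")
    case True
    then have "Y = U C - E" using GC_in[OF C] xG(2) x(2) by blast
    then show ?thesis by blast
  next
    case False
    then have "Y = comp G C x" using GC_out[OF C(1) False] x(2) by simp
    then show ?thesis using xG(1) False by blast
  qed
next
  fix Y assume Y: "Y \<in> insert (U C - E) {comp G C x | x. x \<in> verts G \<and> x \<notin> U C}"
  show "Y \<in> {comp H C x | x. x \<in> verts H}"
  proof (cases "Y = U C - E")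
    case True
    have w: "lc G c0 b \<in> U C - E" "lc G c0 b \<in> verts H" using Uwit[OF C] by auto
    have "comp H C (lc G c0 b) = U C - E" using GC_in[OF C w(1)] .
    then show ?thesis using True w(2) by blast
  next
    case False
    then obtain x where x: "x \<in> verts G" "x \<notin> U C" "Y = comp G C x" using Y by blast
    have "x \<notin> E" using x(2) EsubU by blast
    then have "x \<in> verts H" using x(1) vertsH by blast
    moreover have "Y = comp H C x" using GC_out[OF C(1) x(2)] x(3) by simp
    ultimately show ?thesis by blast
  qed
qed

lemma Y_part: assumes C: "C \<subseteq> colors" and Y: "Y \<inter> U C = {}" "Y = comp G C x0"
  shows "(\<forall>c\<in>C. \<forall>x\<in>Y \<inter> blk G. lc H c x = lc G c x) \<and> blines H C Y = blines G C Y
         \<and> bfaces H C Y = bfaces G C Y \<and> genus H C Y = genus G C Y"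
proof -
  have wtY: "wt \<notin> Y" using Y(1) E_U by blast
  have bY: "b \<notin> Y" using Y(1) E_U by blast
  have l: "\<forall>c\<in>C. \<forall>x\<in>Y \<inter> blk G. lc H c x = lc G c x"
  proof (intro ballI)
    fix c x assume c: "c \<in> C" and x: "x \<in> Y \<inter> blk G"
    have "lc G c x \<noteq> wt"
    proof
      assume eq: "lc G c x = wt"
      have "adj G C x wt" unfolding adj_def using c x eq by blast
      then have "wt \<in> Y" using comp_step[of x G C x0 wt] x Y(2) by blast
      then show False using wtY by blast
    qed
    then show "lc H c x = lc G c x" using H_lc by simp
  qed
  have bl: "blines H C Y = blines G C Y" unfolding blines_eq H_blk using bY by blast
  have bf: "bfaces H C Y = bfaces G C Y"
  proof (intro equalityI subsetI)
    fix t assume t: "t \<in> bfaces H C Y"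
    obtain p q F where tpq: "t = (p,q,F)" by (cases t) auto
    have m: "p \<in> C" "q \<in> C" "p < q" "\<exists>x\<in>verts H. F = comp H {p,q} x" "F \<subseteq> Y"
      using t tpq by (auto simp: mem_bfaces)
    obtain x where x: "x \<in> verts H" "F = comp H {p,q} x" using m(4) by blast
    have "x \<in> Y" using m(5) x(2) comp_refl[of x H "{p,q}"] by blast
    then have "x \<notin> U C" using Y(1) by blast
    moreover have "U {p,q} \<subseteq> U C" using m(1,2) by (intro U_mono) blast
    ultimately have xU: "x \<notin> U {p,q}" by blast
    have "F = comp G {p,q} x" using GC_out[OF _ xU] m(1,2) C x(2) by auto
    moreover have "x \<in> verts G" using x(1) vertsH by blast
    ultimately show "t \<in> bfaces G C Y" using tpq m by (auto simp: mem_bfaces)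
  next
    fix t assume t: "t \<in> bfaces G C Y"
    obtain p q F where tpq: "t = (p,q,F)" by (cases t) auto
    have m: "p \<in> C" "q \<in> C" "p < q" "\<exists>x\<in>verts G. F = comp G {p,q} x" "F \<subseteq> Y"
      using t tpq by (auto simp: mem_bfaces)
    obtain x where x: "x \<in> verts G" "F = comp G {p,q} x" using m(4) by blast
    have "x \<in> Y" using m(5) x(2) comp_refl[of x G "{p,q}"] by blast
    then have xUC: "x \<notin> U C" using Y(1) by blast
    moreover have "U {p,q} \<subseteq> U C" using m(1,2) by (intro U_mono) blast
    ultimately have xU: "x \<notin> U {p,q}" by blast
    have "F = comp H {p,q} x" using GC_out[OF _ xU] m(1,2) C x(2) by auto
    moreover have "x \<notin> E" using xUC EsubU by blast
    then have "x \<in> verts H" using x(1) vertsH by blast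
    ultimately show "t \<in> bfaces H C Y" using tpq m by (auto simp: mem_bfaces)
  qed
  have "genus H C Y = genus G C Y" unfolding genus_def using bl bf by simp
  then show ?thesis using l bl bf by blast
qed

lemma faces_union: assumes C: "C \<subseteq> colors" and B: "Ba = comp G C x1" "Bb = comp G C x2" "Ba \<inter> Bb = {}"
  "finite Ba" "finite Bb"
  shows "card (bfaces G C (Ba \<union> Bb)) = card (bfaces G C Ba) + card (bfaces G C Bb)"
proof -
  have finC: "finite C" using C finite_colors finite_subset by blast
  have eq: "bfaces G C (Ba \<union> Bb) = bfaces G C Ba \<union> bfaces G C Bb"
  proof (intro equalityI subsetI)
    fix t assume t: "t \<in> bfaces G C (Ba \<union> Bb)"
    obtain p q F where tpq: "t = (p,q,F)" by (cases t) auto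
    have m: "p \<in> C" "q \<in> C" "p < q" "\<exists>x\<in>verts G. F = comp G {p,q} x" "F \<subseteq> Ba \<union> Bb"
      using t tpq by (auto simp: mem_bfaces)
    obtain x where x: "x \<in> verts G" "F = comp G {p,q} x" using m(4) by blast
    have xF: "x \<in> F" using x(2) comp_refl[of x G "{p,q}"] by simp
    have FC: "F \<subseteq> comp G C x" using x(2) m(1,2) by (simp add: comp_mono)
    show "t \<in> bfaces G C Ba \<union> bfaces G C Bb"
    proof (cases "x \<in> Ba")
      case True
      then have "comp G C x = Ba" using B(1) comp_eq by simp
      then have "F \<subseteq> Ba" using FC by simp
      then show ?thesis using tpq m by (auto simp: mem_bfaces)
    next
      case False
      then have "x \<in> Bb" using xF m(5) by blast
      then have "comp G C x = Bb" using B(2) comp_eq by simp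
      then have "F \<subseteq> Bb" using FC by simp
      then show ?thesis using tpq m by (auto simp: mem_bfaces)
    qed
  next
    fix t assume "t \<in> bfaces G C Ba \<union> bfaces G C Bb"
    then show "t \<in> bfaces G C (Ba \<union> Bb)" unfolding bfaces_def by blast
  qed
  have dj: "bfaces G C Ba \<inter> bfaces G C Bb = {}"
  proof (rule ccontr)
    assume "bfaces G C Ba \<inter> bfaces G C Bb \<noteq> {}"
    then obtain t where t: "t \<in> bfaces G C Ba" "t \<in> bfaces G C Bb" by blast
    obtain p q F where tpq: "t = (p,q,F)" by (cases t) auto
    have "F \<subseteq> Ba" "F \<subseteq> Bb" "\<exists>x\<in>verts G. F = comp G {p,q} x" using t tpq by (auto simp: mem_bfaces)
    then obtain x where "F = comp G {p,q} x" "F \<subseteq> Ba \<inter> Bb" by blast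
    then have "x \<in> Ba \<inter> Bb" using comp_refl[of x G "{p,q}"] by blast
    then show False using B(3) by blast
  qed
  show ?thesis using eq card_Un_disjoint[OF finite_bfaces[OF finC B(4)] finite_bfaces[OF finC B(5)] dj] by simp
qed

end


context ctr begin

lemma bubbles_alt: "bubbles K k = {comp K (colors - {k}) x | x. x \<in> verts K}"
  by (simp add: bubbles_def)

lemma finU: "C \<subseteq> colors \<Longrightarrow> finite (U C)"
  using U_verts finite_verts finite_subset by blast

lemma card_E: "card E = 2" using b_ne_wt E_def by simp

lemma cardE_diff: assumes "finite X" "E \<subseteq> X" shows "card X = card (X - E) + 2"
proof -
  have "card (X - E) = card X - card E" using card_Diff_subset[OF _ assms(2)] assms(1) finite_subset[OF assms(2)] by blast
  moreover have "card E \<le> card X" using card_mono[OF assms(1,2)] .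
  ultimately show ?thesis using card_E by simp
qed

lemma blk_diff: "(X - E) \<inter> blk H = (X \<inter> blk G) - {b}"
  using H_blk wt_nb E_def by blast

lemma card_blk_diff: assumes "finite X" "b \<in> X"
  shows "card ((X - E) \<inter> blk H) + 1 = card (X \<inter> blk G)"
proof -
  have bX: "b \<in> X \<inter> blk G" using assms(2) bB by blast
  have fX: "finite (X \<inter> blk G)" using assms(1) by simp
  have "card ((X \<inter> blk G) - {b}) = card (X \<inter> blk G) - 1" using card_Diff_singleton[OF bX] .
  moreover have "card (X \<inter> blk G) > 0" using fX bX card_gt_0_iff by blast
  ultimately show ?thesis using blk_diff by simp
qed

lemma part1: assumes vw: "(v = b \<and> w = wt) \<or> (w = b \<and> v = wt)" and k: "k \<in> colors - {i}"
  shows "let C = colors - {k}; X = comp G C v in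
          w \<in> X
        \<and> bubbles H k = insert (X - {v, w}) {Y \<in> bubbles G k. v \<notin> Y}
        \<and> card X = card (X - {v, w}) + 2
        \<and> card (blines G C X) = card (blines H C (X - {v, w})) + 3
        \<and> card (bfaces G C X) = card (bfaces H C (X - {v, w})) + 1
        \<and> genus H C (X - {v, w}) = genus G C X
        \<and> (\<forall>Y\<in>bubbles G k. v \<notin> Y \<longrightarrow>
              (\<forall>c\<in>C. \<forall>x\<in>Y \<inter> blk G. lc H c x = lc G c x)
            \<and> blines H C Y = blines G C Y \<and> bfaces H C Y = bfaces G C Y
            \<and> genus H C Y = genus G C Y)"
proof -
  define C where "C = colors - {k}"
  define X where "X = comp G C v"
  have Csub: "C \<subseteq> colors" unfolding C_def by blast
  have iCC: "i \<in> C" using k iC unfolding C_def by blast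
  have cardC: "card C = 3" using card_colors k unfolding C_def by (simp add: card_Diff_singleton finite_colors)
  have cardCi: "card (C - {i}) = 2" using cardC iCC finite_subset[OF Csub finite_colors] by (simp add: card_Diff_singleton)
  then obtain c0 where c0: "c0 \<in> C" "c0 \<noteq> i" by (metis Diff_iff card_2_iff insertI1 singletonD)
  have "adj G C b wt" unfolding adj_def using bB iCC wt_def by blast
  then have wtb: "wt \<in> comp G C b" by (simp add: comp_def)
  have UC: "U C = comp G C b" unfolding U_def using comp_eq[OF wtb] by simp
  have XU: "X = U C"
    using vw
  proof
    assume "v = b \<and> w = wt" then show ?thesis using UC X_def by simp
  next
    assume "w = b \<and> v = wt" then show ?thesis using UC X_def comp_eq[OF wtb] by simp
  qed
  have vwE: "{v,w} = E" using vw E_def by auto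
  have f1: "w \<in> X" using XU E_U vw by auto
  have eqY: "{Y \<in> bubbles G k. v \<notin> Y} = {comp G C x | x. x \<in> verts G \<and> x \<notin> U C}"
  proof -
    have "v \<in> comp G C x \<longleftrightarrow> x \<in> U C" for x
      using comp_sym[of v G C x] comp_sym[of x G C v] XU X_def by blast
    then show ?thesis unfolding bubbles_alt C_def[symmetric] by blast
  qed
  have f2: "bubbles H k = insert (X - {v, w}) {Y \<in> bubbles G k. v \<notin> Y}"
    unfolding eqY vwE XU unfolding bubbles_alt C_def[symmetric] using bubbles_H[OF Csub c0] .
  have finX: "finite X" using finU[OF Csub] XU by simp
  have EX: "E \<subseteq> X" using XU EsubU by simp
  have f3: "card X = card (X - {v, w}) + 2" using cardE_diff[OF finX EX] vwE by simp
  have f4: "card (blines G C X) = card (blines H C (X - {v, w})) + 3"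
  proof -
    have "b \<in> X" using EX E_def by blast
    then have "card ((X - E) \<inter> blk H) + 1 = card (X \<inter> blk G)" using card_blk_diff finX by blast
    then show ?thesis unfolding blines_eq card_cartesian_product cardC vwE by simp
  qed
  have f5: "card (bfaces G C X) = card (bfaces H C (X - {v, w})) + 1"
  proof -
    have "card (Pairs (C - {i})) = 1"
      using card_Pairs[of "C - {i}"] cardCi finite_subset[OF Csub finite_colors] by simp
    then show ?thesis using faces_count[OF Csub] XU vwE by simp
  qed
  have f6: "genus H C (X - {v, w}) = genus G C X"
    unfolding genus_def using f3 f4 f5 by simp
  have f7: "\<forall>Y\<in>bubbles G k. v \<notin> Y \<longrightarrow>
              (\<forall>c\<in>C. \<forall>x\<in>Y \<inter> blk G. lc H c x = lc G c x)
            \<and> blines H C Y = blines G C Y \<and> bfaces H C Y = bfaces G C Y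
            \<and> genus H C Y = genus G C Y"
  proof (intro ballI impI)
    fix Y assume Y: "Y \<in> bubbles G k" "v \<notin> Y"
    then obtain x0 where x0: "Y = comp G C x0" unfolding bubbles_alt C_def by blast
    have "Y \<inter> U C = {}"
    proof (rule ccontr)
      assume "Y \<inter> U C \<noteq> {}"
      then obtain z where z: "z \<in> Y" "z \<in> X" using XU by blast
      have "comp G C z = Y" using comp_eq[of z G C x0] z(1) x0 by simp
      moreover have "comp G C z = X" using comp_eq[of z G C v] z(2) X_def by simp
      ultimately have "Y = X" by simp
      then show False using Y(2) X_def comp_refl[of v G C] by simp
    qed
    then show "(\<forall>c\<in>C. \<forall>x\<in>Y \<inter> blk G. lc H c x = lc G c x)
            \<and> blines H C Y = blines G C Y \<and> bfaces H C Y = bfaces G C Y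
            \<and> genus H C Y = genus G C Y" using Y_part[OF Csub _ x0] by blast
  qed
  have all: "w \<in> X
        \<and> bubbles H k = insert (X - {v, w}) {Y \<in> bubbles G k. v \<notin> Y}
        \<and> card X = card (X - {v, w}) + 2
        \<and> card (blines G C X) = card (blines H C (X - {v, w})) + 3
        \<and> card (bfaces G C X) = card (bfaces H C (X - {v, w})) + 1
        \<and> genus H C (X - {v, w}) = genus G C X
        \<and> (\<forall>Y\<in>bubbles G k. v \<notin> Y \<longrightarrow>
              (\<forall>c\<in>C. \<forall>x\<in>Y \<inter> blk G. lc H c x = lc G c x)
            \<and> blines H C Y = blines G C Y \<and> bfaces H C Y = bfaces G C Y
            \<and> genus H C Y = genus G C Y)"
    using f1 f2 f3 f4 f5 f6 f7 by (intro conjI)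
  then show ?thesis unfolding Let_def X_def C_def .
qed

end


context ctr begin

lemma part2: assumes vw: "(v = b \<and> w = wt) \<or> (w = b \<and> v = wt)"
  shows "let C = colors - {i}; Ba = comp G C v; Bb = comp G C w;
          M = (Ba \<union> Bb) - {v, w} in
          bubbles H i = insert M (bubbles G i - {Ba, Bb})
        \<and> card M + 2 = card Ba + card Bb
        \<and> card (blines H C M) + 3 = card (blines G C Ba) + card (blines G C Bb)
        \<and> card (bfaces H C M) + 3 = card (bfaces G C Ba) + card (bfaces G C Bb)
        \<and> genus H C M = genus G C Ba + genus G C Bb
        \<and> (genus G C Ba = 0 \<longrightarrow> genus H C M = genus G C Bb)
        \<and> (\<forall>Y\<in>bubbles G i - {Ba, Bb}.
              (\<forall>c\<in>C. \<forall>x\<in>Y \<inter> blk G. lc H c x = lc G c x)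
            \<and> blines H C Y = blines G C Y \<and> bfaces H C Y = bfaces G C Y
            \<and> genus H C Y = genus G C Y)"
proof -
  define C where "C = colors - {i}"
  define Ba where "Ba = comp G C v"
  define Bb where "Bb = comp G C w"
  define M where "M = (Ba \<union> Bb) - {v, w}"
  have Csub: "C \<subseteq> colors" unfolding C_def by blast
  have cardC: "card C = 3" using card_colors iC unfolding C_def by (simp add: card_Diff_singleton finite_colors)
  have CCi: "C - {i} = C" unfolding C_def by blast
  have "C \<noteq> {}" using cardC by auto
  then obtain c0 where c0: "c0 \<in> C" by blast
  have c0i: "c0 \<noteq> i" using c0 C_def by blast
  have vwE: "{v,w} = E" using vw E_def by auto
  have BU: "Ba \<union> Bb = U C" unfolding U_def Ba_def Bb_def using vw by auto
  have MU: "M = U C - E" unfolding M_def BU vwE ..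
  have dj: "Ba \<inter> Bb = {}"
  proof (rule ccontr)
    assume "Ba \<inter> Bb \<noteq> {}"
    then obtain z where z: "z \<in> Ba" "z \<in> Bb" by blast
    have "comp G C v = comp G C w" using comp_eq[of z G C v] comp_eq[of z G C w] z Ba_def Bb_def by simp
    then have "comp G C b = comp G C wt" using vw by auto
    then have "wt \<in> comp G C b" using comp_refl[of wt G C] by simp
    then show False using sep C_def by simp
  qed
  have finU': "finite (U C)" using finU[OF Csub] .
  have finB: "finite Ba" "finite Bb" using finU' BU by (metis finite_Un)+
  have BsubU: "Ba \<subseteq> U C" "Bb \<subseteq> U C" using BU by auto
  have f1: "bubbles H i = insert M (bubbles G i - {Ba, Bb})"
  proof -
    have eq: "bubbles G i - {Ba, Bb} = {comp G C x | x. x \<in> verts G \<and> x \<notin> U C}"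
    proof (intro equalityI subsetI)
      fix Y assume Y: "Y \<in> bubbles G i - {Ba, Bb}"
      then obtain x where x: "x \<in> verts G" "Y = comp G C x" unfolding bubbles_alt C_def by blast
      have "x \<notin> U C"
      proof
        assume "x \<in> U C"
        then have "x \<in> Ba \<or> x \<in> Bb" using BU by blast
        then have "Y = Ba \<or> Y = Bb" using comp_eq[of x G C v] comp_eq[of x G C w] x(2) Ba_def Bb_def by auto
        then show False using Y by blast
      qed
      then show "Y \<in> {comp G C x | x. x \<in> verts G \<and> x \<notin> U C}" using x by blast
    next
      fix Y assume "Y \<in> {comp G C x | x. x \<in> verts G \<and> x \<notin> U C}"
      then obtain x where x: "x \<in> verts G" "x \<notin> U C" "Y = comp G C x" by blast
      have xY: "x \<in> Y" using x(3) comp_refl[of x G C] by simp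
      have "Y \<noteq> Ba" "Y \<noteq> Bb" using xY x(2) BsubU by auto
      moreover have "Y \<in> bubbles G i" unfolding bubbles_alt C_def[symmetric] using x by blast
      ultimately show "Y \<in> bubbles G i - {Ba, Bb}" by blast
    qed
    show ?thesis unfolding eq MU unfolding bubbles_alt C_def[symmetric] using bubbles_H[OF Csub c0 c0i] .
  qed
  have f2: "card M + 2 = card Ba + card Bb"
  proof -
    have "card (Ba \<union> Bb) = card Ba + card Bb" using card_Un_disjoint[OF finB dj] .
    moreover have "card (U C) = card (U C - E) + 2" using cardE_diff[OF finU' EsubU] .
    ultimately show ?thesis using BU MU by simp
  qed
  have f3: "card (blines H C M) + 3 = card (blines G C Ba) + card (blines G C Bb)"
  proof -
    have "card (U C \<inter> blk G) = card (Ba \<inter> blk G) + card (Bb \<inter> blk G)"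
    proof -
      have "U C \<inter> blk G = (Ba \<inter> blk G) \<union> (Bb \<inter> blk G)" using BU by blast
      moreover have "(Ba \<inter> blk G) \<inter> (Bb \<inter> blk G) = {}" using dj by blast
      ultimately show ?thesis using card_Un_disjoint finB by (metis finite_Int)
    qed
    moreover have "card ((U C - E) \<inter> blk H) + 1 = card (U C \<inter> blk G)"
      using card_blk_diff[OF finU'] E_U by blast
    ultimately show ?thesis unfolding blines_eq card_cartesian_product cardC MU by simp
  qed
  have f4: "card (bfaces H C M) + 3 = card (bfaces G C Ba) + card (bfaces G C Bb)"
  proof -
    have "card (Pairs (C - {i})) = 3"
      using card_Pairs[of C] cardC CCi finite_subset[OF Csub finite_colors] by (simp add: choose_two)
    moreover have "card (bfaces G C (U C)) = card (bfaces G C Ba) + card (bfaces G C Bb)"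
      using faces_union[OF Csub Ba_def Bb_def dj finB] BU by simp
    ultimately show ?thesis using faces_count[OF Csub] MU by simp
  qed
  have f5: "genus H C M = genus G C Ba + genus G C Bb"
  proof -
    have e1: "real (card M) = real (card Ba) + real (card Bb) - 2" using f2 by simp
    have e2: "real (card (blines H C M)) = real (card (blines G C Ba)) + real (card (blines G C Bb)) - 3" using f3 by simp
    have e3: "real (card (bfaces H C M)) = real (card (bfaces G C Ba)) + real (card (bfaces G C Bb)) - 3" using f4 by simp
    show ?thesis unfolding genus_def e1 e2 e3 by (simp add: field_simps)
  qed
  have f6: "genus G C Ba = 0 \<longrightarrow> genus H C M = genus G C Bb" using f5 by simp
  have f7: "\<forall>Y\<in>bubbles G i - {Ba, Bb}.
              (\<forall>c\<in>C. \<forall>x\<in>Y \<inter> blk G. lc H c x = lc G c x)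
            \<and> blines H C Y = blines G C Y \<and> bfaces H C Y = bfaces G C Y
            \<and> genus H C Y = genus G C Y"
  proof (intro ballI)
    fix Y assume Y: "Y \<in> bubbles G i - {Ba, Bb}"
    then obtain x0 where x0: "Y = comp G C x0" unfolding bubbles_alt C_def by blast
    have "Y \<inter> U C = {}"
    proof (rule ccontr)
      assume "Y \<inter> U C \<noteq> {}"
      then obtain z where z: "z \<in> Y" "z \<in> Ba \<or> z \<in> Bb" using BU by blast
      have "comp G C z = Y" using comp_eq[of z G C x0] z(1) x0 by simp
      moreover have "comp G C z = Ba \<or> comp G C z = Bb" using comp_eq[of z G C v] comp_eq[of z G C w] z(2) Ba_def Bb_def by auto
      ultimately show False using Y by auto
    qed
    then show "(\<forall>c\<in>C. \<forall>x\<in>Y \<inter> blk G. lc H c x = lc G c x)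
            \<and> blines H C Y = blines G C Y \<and> bfaces H C Y = bfaces G C Y
            \<and> genus H C Y = genus G C Y" using Y_part[OF Csub _ x0] by blast
  qed
  have all: "bubbles H i = insert M (bubbles G i - {Ba, Bb})
        \<and> card M + 2 = card Ba + card Bb
        \<and> card (blines H C M) + 3 = card (blines G C Ba) + card (blines G C Bb)
        \<and> card (bfaces H C M) + 3 = card (bfaces G C Ba) + card (bfaces G C Bb)
        \<and> genus H C M = genus G C Ba + genus G C Bb
        \<and> (genus G C Ba = 0 \<longrightarrow> genus H C M = genus G C Bb)
        \<and> (\<forall>Y\<in>bubbles G i - {Ba, Bb}.
              (\<forall>c\<in>C. \<forall>x\<in>Y \<inter> blk G. lc H c x = lc G c x)
            \<and> blines H C Y = blines G C Y \<and> bfaces H C Y = bfaces G C Y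
            \<and> genus H C Y = genus G C Y)"
    using f1 f2 f3 f4 f5 f6 f7 by (intro conjI)
  then show ?thesis unfolding Let_def M_def Ba_def Bb_def C_def .
qed

end

theorem mainTheorem3:
  fixes G :: "'v cgraph" and b v w :: 'v and i :: nat
  assumes "colored_graph G"
    and "b \<in> blk G" and "i \<in> colors"
    and "(v = b \<and> w = lc G i b) \<or> (w = b \<and> v = lc G i b)"
    and "comp G (colors - {i}) v \<noteq> comp G (colors - {i}) w"
  shows
    "(\<forall>k\<in>colors - {i}.
        let C = colors - {k}; X = comp G C v; H = contract G b i in
          w \<in> X
        \<and> bubbles H k = insert (X - {v, w}) {Y \<in> bubbles G k. v \<notin> Y}
        \<and> card X = card (X - {v, w}) + 2
        \<and> card (blines G C X) = card (blines H C (X - {v, w})) + 3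
        \<and> card (bfaces G C X) = card (bfaces H C (X - {v, w})) + 1
        \<and> genus H C (X - {v, w}) = genus G C X
        \<and> (\<forall>Y\<in>bubbles G k. v \<notin> Y \<longrightarrow>
              (\<forall>c\<in>C. \<forall>x\<in>Y \<inter> blk G. lc H c x = lc G c x)
            \<and> blines H C Y = blines G C Y \<and> bfaces H C Y = bfaces G C Y
            \<and> genus H C Y = genus G C Y))
   \<and> (let C = colors - {i}; Ba = comp G C v; Bb = comp G C w; H = contract G b i;
          M = (Ba \<union> Bb) - {v, w} in
          bubbles H i = insert M (bubbles G i - {Ba, Bb})
        \<and> card M + 2 = card Ba + card Bb
        \<and> card (blines H C M) + 3 = card (blines G C Ba) + card (blines G C Bb)
        \<and> card (bfaces H C M) + 3 = card (bfaces G C Ba) + card (bfaces G C Bb)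
        \<and> genus H C M = genus G C Ba + genus G C Bb
        \<and> (genus G C Ba = 0 \<longrightarrow> genus H C M = genus G C Bb)
        \<and> (\<forall>Y\<in>bubbles G i - {Ba, Bb}.
              (\<forall>c\<in>C. \<forall>x\<in>Y \<inter> blk G. lc H c x = lc G c x)
            \<and> blines H C Y = blines G C Y \<and> bfaces H C Y = bfaces G C Y
            \<and> genus H C Y = genus G C Y))"
proof -
  have sep: "lc G i b \<notin> comp G (colors - {i}) b"
  proof
    assume h: "lc G i b \<in> comp G (colors - {i}) b"
    then have "comp G (colors - {i}) (lc G i b) = comp G (colors - {i}) b" by (rule comp_eq)
    then show False using assms(4,5) by auto
  qed
  interpret ctr G b i "lc G i b" "contract G b i" "{b, lc G i b}"
    using assms(1,2,3) sep by unfold_locales auto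
  note p1 = part1[OF assms(4), unfolded Let_def]
  note p2 = part2[OF assms(4), unfolded Let_def]
  show ?thesis
    apply (unfold Let_def)
    apply (rule conjI)
     apply (rule ballI)
     apply (rule p1)
     apply assumption
    apply (rule p2)
    done
qed

end
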